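(* Assume the setting and hypotheses of the previous statement (the orthogonality conditions on $\hat f_v,\hat g_w$ for $x\ge1$), together with the cone setting of the context, and assume moreover that $\Phi_{v,w}(e^{v,w}_0)\in C_{v,w}$ and $\hat\Phi^*_{v,w}(e^{v,w}_0)\in C^*_{v,w}$ for all $(v,w)\in E$, with $\langle \Phi_{v,w}(e^{v,w}_0),u^*_{v,w}\rangle>0$ and $\langle u_{v,w},\hat\Phi^*_{v,w}(e^{v,w}_0)\rangle>0$. Write $\Phi_{v,w}(e^{v,w}_0)=c_{v,w}m_{v\to w}$ and $\hat\Phi^*_{v,w}(e^{v,w}_0)=\hat c_{v,w}m_{w\to v}$ with $c_{v,w},\hat c_{v,w}>0$, $m_{v\to w}\in C_{v,w}$, $m_{w\to v}\in C^*_{v,w}$, $\langle m_{v\to w},u^*_{v,w}\rangle=1$, $\langle u_{v,w},m_{w\to v}\rangle=1$. Then: (i) $c_{v,w}\hat c_{v,w}\langle m_{v\to w},m_{w\to v}\rangle_{\mathcal{V}_{v,w}}=1$ for every edge; (ii) for every $(v,w)\in E$, $$\Big\langle f_v,\bigotimes_{w'\in\partial v\setminus\{w\}}m_{w'\to v}\Big\rangle_{\mathcal{V}_{\partial v\setminus w}}=\frac{\alpha_v c_{v,w}}{\prod_{w'\in\partial v\setminus\{w\}}\hat c_{v,w'}}\,m_{v\to w},\qquad \Big\langle\bigotimes_{v'\in\partial w\setminus\{v\}}m_{v'\to w},g_w\Big\rangle_{\mathcal{V}_{\partial w\setminus v}}=\frac{\hat\alpha_w\hat c_{v,w}}{\prod_{v'\in\partial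 w\setminus\{v\}}c_{v',w}}\,m_{w\to v},$$ so that (whenever $\alpha_v,\hat\alpha_w>0$) the messages $(m_{v\to w},m_{w\to v})_{(v,w)\in E}$ form a fixed point of belief propagation; (iii) the term of the all-zero assignment in the expansion of $\langle\bigotimes_v\hat f_v,\bigotimes_w\hat g_w\rangle_{\mathcal V}$ with respect to the bases $(e^{v,w}_x)$, namely $\prod_{v\in V}\alpha_v\prod_{w\in W}\hat\alpha_w$, equals $$\prod_{v\in V}\Big\langle f_v,\bigotimes_{w\in\partial v}m_{w\to v}\Big\rangle_{\mathcal{V}_{\partial v}}\prod_{w\in W}\Big\langle\bigotimes_{v\in\partial w}m_{v\to w},g_w\Big\rangle_{\mathcal{V}_{\partial w}}\prod_{(v,w)\in E}\frac{1}{\langle m_{v\to w},m_{w\to v}\rangle_{\mathcal{V}_{v,w}}}.$$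
   Context: Bipartite graph $(V,W,E\subseteq V\times W)$, $\partial v=\{w:(v,w)\in E\}$, $\partial w=\{v:(v,w)\in E\}$. For each edge, $\mathcal{V}_{v,w}$ is a real inner product space of dimension $q_{v,w}$ with orthonormal basis $(e^{v,w}_x)_{x=0,\dots,q_{v,w}-1}$; tensor products carry the product inner product. $\mathcal{V}_{\partial v}=\bigotimes_{w\in\partial v}\mathcal{V}_{v,w}$, $\mathcal{V}_{\partial w}=\bigotimes_{v\in\partial w}\mathcal{V}_{v,w}$, $\mathcal{V}_{\partial v\setminus w}$, $\mathcal{V}_{\partial w\setminus v}$ the tensor products over the neighbours other than $w$ (resp. $v$). $f_v\in\mathcal{V}_{\partial v}$, $g_w\in\mathcal{V}_{\partial w}$. $\Phi_{v,w}$ invertible on $\mathcal{V}_{v,w}$, $\hat\Phi_{v,w}=\Phi_{v,w}^{-1}$, $A^*$ is the adjoint with respect to the inner product; $\hat f_v=(\bigotimes_{w\in\partial v}\hat\Phi_{v,w})(f_v)$, $\hat g_w=(\bigotimes_{v\in\partial w}\Phi^*_{v,w})(g_w)$; $\alpha_v=\langle\hat f_v,\bigotimes_{w\in\partial v}e^{v,w}_0\rangle$, $\hat\alpha_w=\langle\bigotimes_{v\in\partial w}e^{v,w}_0,\hat g_w\rangle$. The hypotheses of the previous statement are: $\langle\hat f_v,e^{v,w}_x\otimes\bigotimes_{w'\in\partial v\setminus\{w\}}e^{v,w'}_0\rangle=0$ and $\langle e^{v,w}_x\otimes\bigotimes_{v'\in\partial w\setminus\{v\}}e^{v',w}_0,\hat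 g_w\rangle=0$ for all edges and $x\in\{1,\dots,q_{v,w}-1\}$. Partial inner product: for $f\in\mathcal V\otimes\mathcal W$, $g\in\mathcal V$, $\langle f,g\rangle_{\mathcal V}\in\mathcal W$ is determined by $\langle\langle f,g\rangle_{\mathcal V},h\rangle=\langle f,g\otimes h\rangle$ for all $h\in\mathcal W$. Cones: $C_{v,w}\subseteq\mathcal{V}_{v,w}$ closed convex cones, $C^*$ the dual cone $\{f:\langle f,g\rangle\ge0\ \forall g\in C\}$; $u_{v,w}$ and $u^*_{v,w}$ are fixed vectors in the interiors of $C_{v,w}$ and $C^*_{v,w}$. A belief propagation fixed point is a family $m_{v\to w}\in C_{v,w}$, $m_{w\to v}\in C^*_{v,w}$ with $\langle m_{v\to w},u^*_{v,w}\rangle=1=\langle u_{v,w},m_{w\to v}\rangle$ such that $m_{v\to w}$ is a strictly positive multiple of $\langle f_v,\bigotimes_{w'\in\partial v\setminus\{w\}}m_{w'\to v}\rangle$ and $m_{w\to v}$ is a strictly positive multiple of $\langle\bigotimes_{v'\in\partial w\setminus\{v\}}m_{v'\to w},g_w\rangle$. *)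

theory Defs
  imports "HOL-Analysis.Analysis"
begin

text \<open>Each edge space V_e (e = (v,w)) of dimension q e is represented by its
coordinate vectors w.r.t. the orthonormal basis (e_x)_{x<q e}: functions nat => real vanishing
for indices >= q e. A tensor over a finite set S of edges (an element of the tensor product of
the V_e, e in S) is represented by its coordinates w.r.t. the product basis, i.e. a function on
assignments x with x e < q e for e in S (and x e = 0 outside S).\<close>

type_synonym 'e tensor = "('e \<Rightarrow> nat) \<Rightarrow> real"

definition espace :: "nat \<Rightarrow> (nat \<Rightarrow> real) set" where
  "espace n = {a. \<forall>i\<ge>n. a i = 0}"

definition evec :: "nat \<Rightarrow> nat \<Rightarrow> real" where
  "evec k = (\<lambda>i. if i = k then 1 else 0)"

definition einner :: "nat \<Rightarrow> (nat \<Rightarrow> real) \<Rightarrow> (nat \<Rightarrow> real) \<Rightarrow> real" where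
  "einner n a b = (\<Sum>i<n. a i * b i)"

text \<open>Matrix (w.r.t. the orthonormal basis) applied to a vector; adjoint = transpose.\<close>
definition mapp :: "nat \<Rightarrow> (nat \<Rightarrow> nat \<Rightarrow> real) \<Rightarrow> (nat \<Rightarrow> real) \<Rightarrow> nat \<Rightarrow> real" where
  "mapp n A a = (\<lambda>i. if i < n then (\<Sum>j<n. A i j * a j) else 0)"

definition adj :: "(nat \<Rightarrow> nat \<Rightarrow> real) \<Rightarrow> nat \<Rightarrow> nat \<Rightarrow> real" where
  "adj A = (\<lambda>i j. A j i)"

definition is_inverse :: "nat \<Rightarrow> (nat \<Rightarrow> nat \<Rightarrow> real) \<Rightarrow> (nat \<Rightarrow> nat \<Rightarrow> real) \<Rightarrow> bool" where
  "is_inverse n A B \<longleftrightarrow>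
     (\<forall>i<n. \<forall>j<n. (\<Sum>k<n. A i k * B k j) = (if i = j then 1 else 0)) \<and>
     (\<forall>i<n. \<forall>j<n. (\<Sum>k<n. B i k * A k j) = (if i = j then 1 else 0))"

definition asg :: "('e \<Rightarrow> nat) \<Rightarrow> 'e set \<Rightarrow> ('e \<Rightarrow> nat) set" where
  "asg q S = {x. (\<forall>e\<in>S. x e < q e) \<and> (\<forall>e. e \<notin> S \<longrightarrow> x e = 0)}"

definition tinner :: "('e \<Rightarrow> nat) \<Rightarrow> 'e set \<Rightarrow> 'e tensor \<Rightarrow> 'e tensor \<Rightarrow> real" where
  "tinner q S T U = (\<Sum>x\<in>asg q S. T x * U x)"

definition tprod :: "'e set \<Rightarrow> ('e \<Rightarrow> nat \<Rightarrow> real) \<Rightarrow> 'e tensor" where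
  "tprod S m = (\<lambda>x. \<Prod>e\<in>S. m e (x e))"

text \<open>Partial inner products: for T over S and U over S' (S' a subset of S), the tensor
over S - S'. pinner is <T,U>_{S'}, lpinner is <U,T>_{S'} (U in the left slot).\<close>
definition pinner :: "('e \<Rightarrow> nat) \<Rightarrow> 'e set \<Rightarrow> 'e tensor \<Rightarrow> 'e tensor \<Rightarrow> 'e tensor" where
  "pinner q S' T U = (\<lambda>y. \<Sum>x\<in>asg q S'. T (\<lambda>e. if e \<in> S' then x e else y e) * U x)"

definition lpinner :: "('e \<Rightarrow> nat) \<Rightarrow> 'e set \<Rightarrow> 'e tensor \<Rightarrow> 'e tensor \<Rightarrow> 'e tensor" where
  "lpinner q S' U T = (\<lambda>y. \<Sum>x\<in>asg q S'. U x * T (\<lambda>e. if e \<in> S' then x e else y e))"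

definition tmap :: "('e \<Rightarrow> nat) \<Rightarrow> 'e set \<Rightarrow> ('e \<Rightarrow> nat \<Rightarrow> nat \<Rightarrow> real) \<Rightarrow> 'e tensor \<Rightarrow> 'e tensor" where
  "tmap q S A T = (\<lambda>x. \<Sum>y\<in>asg q S. (\<Prod>e\<in>S. A e (x e) (y e)) * T y)"

text \<open>Neighbourhoods as edge sets: \<partial>v corresponds to {(v,w) | w}, \<partial>w to {(v,w) | v}.\<close>
definition Ev :: "('v \<times> 'w) set \<Rightarrow> 'v \<Rightarrow> ('v \<times> 'w) set" where
  "Ev E v = {e\<in>E. fst e = v}"

definition Ew :: "('v \<times> 'w) set \<Rightarrow> 'w \<Rightarrow> ('v \<times> 'w) set" where
  "Ew E w = {e\<in>E. snd e = w}"

definition closed_convex_cone :: "nat \<Rightarrow> (nat \<Rightarrow> real) set \<Rightarrow> bool" where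
  "closed_convex_cone n C \<longleftrightarrow> C \<subseteq> espace n \<and> C \<noteq> {} \<and> closed C \<and>
     (\<forall>a\<in>C. \<forall>b\<in>C. \<forall>t::real. 0 \<le> t \<and> t \<le> 1 \<longrightarrow> (\<lambda>i. t * a i + (1 - t) * b i) \<in> C) \<and>
     (\<forall>a\<in>C. \<forall>c::real. 0 \<le> c \<longrightarrow> (\<lambda>i. c * a i) \<in> C)"

definition dual_cone :: "nat \<Rightarrow> (nat \<Rightarrow> real) set \<Rightarrow> (nat \<Rightarrow> real) set" where
  "dual_cone n C = {f \<in> espace n. \<forall>g\<in>C. einner n f g \<ge> 0}"

definition in_einterior :: "nat \<Rightarrow> (nat \<Rightarrow> real) set \<Rightarrow> (nat \<Rightarrow> real) \<Rightarrow> bool" where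
  "in_einterior n C u \<longleftrightarrow> (\<exists>T. openin (top_of_set (espace n)) T \<and> u \<in> T \<and> T \<subseteq> C)"

definition fhat where
  "fhat q E Phih f v = tmap q (Ev E v) Phih (f v)"

definition ghat where
  "ghat q E Phi g w = tmap q (Ew E w) (\<lambda>e. adj (Phi e)) (g w)"

definition alpha where
  "alpha q E Phih f v = tinner q (Ev E v) (fhat q E Phih f v) (tprod (Ev E v) (\<lambda>_. evec 0))"

definition alphah where
  "alphah q E Phi g w = tinner q (Ew E w) (tprod (Ew E w) (\<lambda>_. evec 0)) (ghat q E Phi g w)"

definition bp_fixed_point where
  "bp_fixed_point q E C u us f g mvw mwv \<longleftrightarrow>
    (\<forall>e\<in>E. mvw e \<in> C e \<and> mwv e \<in> dual_cone (q e) (C e) \<and>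
       einner (q e) (mvw e) (us e) = 1 \<and> einner (q e) (u e) (mwv e) = 1) \<and>
    (\<forall>v w. (v, w) \<in> E \<longrightarrow> (\<exists>k>0. \<forall>y\<in>asg q {(v, w)}.
        mvw (v, w) (y (v, w)) =
          k * pinner q (Ev E v - {(v, w)}) (f v) (tprod (Ev E v - {(v, w)}) mwv) y)) \<and>
    (\<forall>v w. (v, w) \<in> E \<longrightarrow> (\<exists>k>0. \<forall>y\<in>asg q {(v, w)}.
        mwv (v, w) (y (v, w)) =
          k * lpinner q (Ew E w - {(v, w)}) (tprod (Ew E w - {(v, w)}) mvw) (g w) y))"

end

theory Submission
  imports Defs
begin



lemma asg_empty: "asg q {} = {\<lambda>_. 0}"
  by (auto simp: asg_def)

lemma asg_insert: assumes "a \<notin> S"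
  shows "asg q (insert a S) = (\<lambda>(k,x). x(a:=k)) ` ({..<q a} \<times> asg q S)"
proof
  show "(\<lambda>(k,x). x(a:=k)) ` ({..<q a} \<times> asg q S) \<subseteq> asg q (insert a S)"
    using assms by (auto simp: asg_def)
next
  show "asg q (insert a S) \<subseteq> (\<lambda>(k,x). x(a:=k)) ` ({..<q a} \<times> asg q S)"
  proof
    fix z assume z: "z \<in> asg q (insert a S)"
    have "z = (\<lambda>(k,x). x(a:=k)) (z a, z(a:=0))" by auto
    moreover have "(z a, z(a:=0)) \<in> {..<q a} \<times> asg q S"
      using z by (auto simp: asg_def)
    ultimately show "z \<in> (\<lambda>(k,x). x(a:=k)) ` ({..<q a} \<times> asg q S)" by blast
  qed
qed

lemma asg_insert_inj: assumes "a \<notin> S"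
  shows "inj_on (\<lambda>(k,x). x(a:=k)) ({..<q a} \<times> asg q S)"
proof (rule inj_onI, clarify)
  fix k x k' x' assume x: "x \<in> asg q S" and x': "x' \<in> asg q S" and eq: "x(a := k) = x'(a := k')"
  have "k = k'" using fun_cong[OF eq, of a] by simp
  moreover have "x = x'"
  proof
    fix e show "x e = x' e"
    proof (cases "e = a")
      case True then show ?thesis using x x' assms by (auto simp: asg_def)
    next
      case False then show ?thesis using fun_cong[OF eq, of e] by simp
    qed
  qed
  ultimately show "k = k' \<and> x = x'" by simp
qed

lemma finite_asg: "finite S \<Longrightarrow> finite (asg q S)"
proof (induction S rule: finite_induct)
  case empty then show ?case by (simp add: asg_empty)
next
  case (insert a S) then show ?case by (simp add: asg_insert)
qed

lemma sum_asg_insert: assumes "finite S" "a \<notin> S"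
  shows "sum F (asg q (insert a S)) = (\<Sum>k<q a. \<Sum>x\<in>asg q S. F (x(a:=k)))"
proof -
  have "sum F (asg q (insert a S)) = sum (F \<circ> (\<lambda>(k,x). x(a:=k))) ({..<q a} \<times> asg q S)"
    unfolding asg_insert[OF assms(2)] by (rule sum.reindex[OF asg_insert_inj[OF assms(2)]])
  also have "\<dots> = (\<Sum>k<q a. \<Sum>x\<in>asg q S. F (x(a:=k)))"
    by (simp add: sum.cartesian_product split_def)
  finally show ?thesis .
qed

lemma pick: fixes T :: "'e tensor" assumes "finite S" "x0 \<in> asg q S"
  shows "(\<Sum>x\<in>asg q S. T x * (\<Prod>e\<in>S. evec (x0 e) (x e))) = T x0"
proof -
  have fin: "finite (asg q S)" using finite_asg[OF assms(1)] .
  have "(\<Sum>x\<in>asg q S. T x * (\<Prod>e\<in>S. evec (x0 e) (x e))) =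
     T x0 * (\<Prod>e\<in>S. evec (x0 e) (x0 e)) + (\<Sum>x\<in>asg q S - {x0}. T x * (\<Prod>e\<in>S. evec (x0 e) (x e)))"
    using sum.remove[OF fin assms(2)] by simp
  moreover have "(\<Sum>x\<in>asg q S - {x0}. T x * (\<Prod>e\<in>S. evec (x0 e) (x e))) = 0"
  proof (rule sum.neutral, rule ballI)
    fix x assume x: "x \<in> asg q S - {x0}"
    then obtain e where ne: "x e \<noteq> x0 e" by auto
    have "e \<in> S" using x assms(2) ne by (auto simp: asg_def)
    then have "(\<Prod>e\<in>S. evec (x0 e) (x e)) = 0"
      using ne assms(1) by (intro prod_zero) (auto simp: evec_def intro!: bexI[of _ e])
    then show "T x * (\<Prod>e\<in>S. evec (x0 e) (x e)) = 0" by simp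
  qed
  ultimately show ?thesis by (simp add: evec_def)
qed

lemma pick': fixes T :: "'e tensor" assumes "finite S" "x0 \<in> asg q S"
  shows "(\<Sum>x\<in>asg q S. (\<Prod>e\<in>S. evec (x0 e) (x e)) * T x) = T x0"
  using pick[OF assms, of T] by (simp add: mult.commute)

lemma full_lemma:
  fixes A :: "'e \<Rightarrow> nat \<Rightarrow> nat \<Rightarrow> real" and F :: "'e tensor" and d :: "'e \<Rightarrow> real" and m :: "'e \<Rightarrow> nat \<Rightarrow> real"
  assumes "finite S" "\<forall>e\<in>S. \<forall>i<q e. A e 0 i = d e * m e i"
  shows "(\<Sum>y\<in>asg q S. (\<Prod>e\<in>S. A e 0 (y e)) * F y) = (\<Prod>e\<in>S. d e) * (\<Sum>y\<in>asg q S. F y * (\<Prod>e\<in>S. m e (y e)))"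
proof -
  have "(\<Sum>y\<in>asg q S. (\<Prod>e\<in>S. A e 0 (y e)) * F y) = (\<Sum>y\<in>asg q S. (\<Prod>e\<in>S. d e) * (F y * (\<Prod>e\<in>S. m e (y e))))"
  proof (rule sum.cong[OF refl])
    fix y assume y: "y \<in> asg q S"
    have "(\<Prod>e\<in>S. A e 0 (y e)) = (\<Prod>e\<in>S. d e * m e (y e))"
      using y assms(2) by (intro prod.cong) (auto simp: asg_def)
    then show "(\<Prod>e\<in>S. A e 0 (y e)) * F y = (\<Prod>e\<in>S. d e) * (F y * (\<Prod>e\<in>S. m e (y e)))"
      by (simp add: prod.distrib mult_ac)
  qed
  then show ?thesis by (simp only: sum_distrib_left)
qed

lemma gen_lemma:
  fixes A :: "'e \<Rightarrow> nat \<Rightarrow> nat \<Rightarrow> real" and F :: "'e tensor" and d :: "'e \<Rightarrow> real" and m :: "'e \<Rightarrow> nat \<Rightarrow> real"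
  assumes "finite S" "e0 \<notin> S" "\<forall>e\<in>S. \<forall>i<q e. A e 0 i = d e * m e i"
  shows "(\<Sum>y\<in>asg q (insert e0 S). (\<Prod>e\<in>insert e0 S. A e (if e = e0 then j else 0) (y e)) * F y)
     = (\<Sum>k<q e0. A e0 j k * (\<Prod>e\<in>S. d e) * (\<Sum>x\<in>asg q S. F (x(e0:=k)) * (\<Prod>e\<in>S. m e (x e))))"
proof -
  have "(\<Sum>y\<in>asg q (insert e0 S). (\<Prod>e\<in>insert e0 S. A e (if e = e0 then j else 0) (y e)) * F y)
    = (\<Sum>k<q e0. \<Sum>x\<in>asg q S. (\<Prod>e\<in>insert e0 S. A e (if e = e0 then j else 0) ((x(e0:=k)) e)) * F (x(e0:=k)))"
    by (rule sum_asg_insert[OF assms(1,2)])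
  also have "\<dots> = (\<Sum>k<q e0. A e0 j k * (\<Prod>e\<in>S. d e) * (\<Sum>x\<in>asg q S. F (x(e0:=k)) * (\<Prod>e\<in>S. m e (x e))))"
  proof (rule sum.cong[OF refl])
    fix k
    have "(\<Sum>x\<in>asg q S. (\<Prod>e\<in>insert e0 S. A e (if e = e0 then j else 0) ((x(e0:=k)) e)) * F (x(e0:=k)))
      = (\<Sum>x\<in>asg q S. A e0 j k * ((\<Prod>e\<in>S. A e 0 (x e)) * F (x(e0:=k))))"
    proof (rule sum.cong[OF refl])
      fix x assume "x \<in> asg q S"
      have "(\<Prod>e\<in>insert e0 S. A e (if e = e0 then j else 0) ((x(e0:=k)) e))
         = A e0 j k * (\<Prod>e\<in>S. A e (if e = e0 then j else 0) ((x(e0:=k)) e))"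
        using assms by (simp add: prod.insert)
      also have "(\<Prod>e\<in>S. A e (if e = e0 then j else 0) ((x(e0:=k)) e)) = (\<Prod>e\<in>S. A e 0 (x e))"
        using assms(2) by (intro prod.cong) auto
      finally show "(\<Prod>e\<in>insert e0 S. A e (if e = e0 then j else 0) ((x(e0:=k)) e)) * F (x(e0:=k))
          = A e0 j k * ((\<Prod>e\<in>S. A e 0 (x e)) * F (x(e0:=k)))" by (simp add: mult_ac)
    qed
    also have "\<dots> = A e0 j k * (\<Sum>x\<in>asg q S. (\<Prod>e\<in>S. A e 0 (x e)) * F (x(e0:=k)))"
      by (rule sum_distrib_left[symmetric])
    also have "(\<Sum>x\<in>asg q S. (\<Prod>e\<in>S. A e 0 (x e)) * F (x(e0:=k))) =
       (\<Prod>e\<in>S. d e) * (\<Sum>x\<in>asg q S. F (x(e0:=k)) * (\<Prod>e\<in>S. m e (x e)))"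
      by (rule full_lemma[of S q A d m, OF assms(1,3)])
    finally show "(\<Sum>x\<in>asg q S. (\<Prod>e\<in>insert e0 S. A e (if e = e0 then j else 0) ((x(e0:=k)) e)) * F (x(e0:=k)))
      = A e0 j k * (\<Prod>e\<in>S. d e) * (\<Sum>x\<in>asg q S. F (x(e0:=k)) * (\<Prod>e\<in>S. m e (x e)))"
      by (simp only: mult.assoc)
  qed
  finally show ?thesis .
qed

lemma inv_apply:
  fixes M N :: "nat \<Rightarrow> nat \<Rightarrow> real"
  assumes "\<forall>i<n. \<forall>k<n. (\<Sum>j<n. M i j * N j k) = (if i = k then 1 else 0)"
    "\<forall>j<n. (\<Sum>k<n. N j k * Q k) = (if j = 0 then a else 0)" "0 < n" "i < n"
  shows "Q i = M i 0 * a"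
proof -
  have "(\<Sum>j<n. M i j * (\<Sum>k<n. N j k * Q k)) = (\<Sum>j<n. M i j * (if j = 0 then a else 0))"
    using assms(2) by (intro sum.cong) auto
  also have "\<dots> = M i 0 * a" using assms(3) by (simp add: if_distrib cong: if_cong)
  finally have 1: "(\<Sum>j<n. M i j * (\<Sum>k<n. N j k * Q k)) = M i 0 * a" .
  have "(\<Sum>j<n. M i j * (\<Sum>k<n. N j k * Q k)) = (\<Sum>j<n. \<Sum>k<n. M i j * N j k * Q k)"
    by (simp add: sum_distrib_left mult.assoc)
  also have "\<dots> = (\<Sum>k<n. \<Sum>j<n. M i j * N j k * Q k)" by (rule sum.swap)
  also have "\<dots> = (\<Sum>k<n. (\<Sum>j<n. M i j * N j k) * Q k)" by (simp add: sum_distrib_right)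
  also have "\<dots> = (\<Sum>k<n. (if i = k then 1 else 0) * Q k)"
    using assms(1,4) by (intro sum.cong) auto
  also have "\<dots> = (\<Sum>k<n. if i = k then Q k else 0)" by (intro sum.cong) auto
  also have "\<dots> = Q i" using assms(4) by simp
  finally show ?thesis using 1 by simp
qed

lemma mapp_evec0: "0 < n \<Longrightarrow> i < n \<Longrightarrow> mapp n A (evec 0) i = A i 0"
  by (simp add: mapp_def evec_def if_distrib cong: if_cong)


theorem mainTheorem4:
  fixes V :: "'v set" and W :: "'w set" and E :: "('v \<times> 'w) set"
    and q :: "'v \<times> 'w \<Rightarrow> nat"
    and f :: "'v \<Rightarrow> ('v \<times> 'w) tensor" and g :: "'w \<Rightarrow> ('v \<times> 'w) tensor"
    and Phi Phih :: "'v \<times> 'w \<Rightarrow> nat \<Rightarrow> nat \<Rightarrow> real"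
    and C :: "'v \<times> 'w \<Rightarrow> (nat \<Rightarrow> real) set"
    and u us :: "'v \<times> 'w \<Rightarrow> nat \<Rightarrow> real"
    and mvw mwv :: "'v \<times> 'w \<Rightarrow> nat \<Rightarrow> real"
    and c ch :: "'v \<times> 'w \<Rightarrow> real"
  assumes graph: "finite V" "finite W" "E \<subseteq> V \<times> W"
    and dim: "\<forall>e\<in>E. q e \<ge> 1"
    and inv: "\<forall>e\<in>E. is_inverse (q e) (Phi e) (Phih e)"
    and orth_f: "\<forall>v w x. (v, w) \<in> E \<longrightarrow> 1 \<le> x \<longrightarrow> x < q (v, w) \<longrightarrow>
        tinner q (Ev E v) (fhat q E Phih f v)
          (tprod (Ev E v) (\<lambda>e. if e = (v, w) then evec x else evec 0)) = 0"
    and orth_g: "\<forall>v w x. (v, w) \<in> E \<longrightarrow> 1 \<le> x \<longrightarrow> x < q (v, w) \<longrightarrow>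
        tinner q (Ew E w)
          (tprod (Ew E w) (\<lambda>e. if e = (v, w) then evec x else evec 0)) (ghat q E Phi g w) = 0"
    and cones: "\<forall>e\<in>E. closed_convex_cone (q e) (C e)"
    and u_int: "\<forall>e\<in>E. in_einterior (q e) (C e) (u e)"
    and us_int: "\<forall>e\<in>E. in_einterior (q e) (dual_cone (q e) (C e)) (us e)"
    and Phi_C: "\<forall>e\<in>E. mapp (q e) (Phi e) (evec 0) \<in> C e"
    and Phih_C: "\<forall>e\<in>E. mapp (q e) (adj (Phih e)) (evec 0) \<in> dual_cone (q e) (C e)"
    and Phi_pos: "\<forall>e\<in>E. einner (q e) (mapp (q e) (Phi e) (evec 0)) (us e) > 0"
    and Phih_pos: "\<forall>e\<in>E. einner (q e) (u e) (mapp (q e) (adj (Phih e)) (evec 0)) > 0"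
    and decomp: "\<forall>e\<in>E. mapp (q e) (Phi e) (evec 0) = (\<lambda>i. c e * mvw e i)"
    and decomph: "\<forall>e\<in>E. mapp (q e) (adj (Phih e)) (evec 0) = (\<lambda>i. ch e * mwv e i)"
    and c_pos: "\<forall>e\<in>E. c e > 0 \<and> ch e > 0"
    and m_C: "\<forall>e\<in>E. mvw e \<in> C e \<and> mwv e \<in> dual_cone (q e) (C e)"
    and m_norm: "\<forall>e\<in>E. einner (q e) (mvw e) (us e) = 1 \<and> einner (q e) (u e) (mwv e) = 1"
  shows
    "(\<forall>e\<in>E. c e * ch e * einner (q e) (mvw e) (mwv e) = 1)
     \<and> (\<forall>v w. (v, w) \<in> E \<longrightarrow> (\<forall>y\<in>asg q {(v, w)}.
          pinner q (Ev E v - {(v, w)}) (f v) (tprod (Ev E v - {(v, w)}) mwv) y =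
            alpha q E Phih f v * c (v, w) / (\<Prod>e\<in>Ev E v - {(v, w)}. ch e) * mvw (v, w) (y (v, w))))
     \<and> (\<forall>v w. (v, w) \<in> E \<longrightarrow> (\<forall>y\<in>asg q {(v, w)}.
          lpinner q (Ew E w - {(v, w)}) (tprod (Ew E w - {(v, w)}) mvw) (g w) y =
            alphah q E Phi g w * ch (v, w) / (\<Prod>e\<in>Ew E w - {(v, w)}. c e) * mwv (v, w) (y (v, w))))
     \<and> ((\<forall>v\<in>V. alpha q E Phih f v > 0) \<and> (\<forall>w\<in>W. alphah q E Phi g w > 0) \<longrightarrow>
          bp_fixed_point q E C u us f g mvw mwv)
     \<and> (\<Prod>v\<in>V. alpha q E Phih f v) * (\<Prod>w\<in>W. alphah q E Phi g w) =
        (\<Prod>v\<in>V. tinner q (Ev E v) (f v) (tprod (Ev E v) mwv)) *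
        (\<Prod>w\<in>W. tinner q (Ew E w) (tprod (Ew E w) mvw) (g w)) *
        (\<Prod>e\<in>E. 1 / einner (q e) (mvw e) (mwv e))"
proof -
  have finE: "finite E" using graph finite_subset[OF graph(3)] by blast
  have qpos: "\<forall>e\<in>E. 0 < q e" using dim by auto
  have PhiE: "\<forall>e\<in>E. \<forall>i<q e. Phi e i 0 = c e * mvw e i"
  proof (intro ballI allI impI)
    fix e i assume e: "e \<in> E" and i: "i < q e"
    have "mapp (q e) (Phi e) (evec 0) i = c e * mvw e i" using decomp e by metis
    then show "Phi e i 0 = c e * mvw e i" using mapp_evec0[of "q e" i "Phi e"] qpos e i by simp
  qed
  have PhihE: "\<forall>e\<in>E. \<forall>i<q e. Phih e 0 i = ch e * mwv e i"
  proof (intro ballI allI impI)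
    fix e i assume e: "e \<in> E" and i: "i < q e"
    have "mapp (q e) (adj (Phih e)) (evec 0) i = ch e * mwv e i" using decomph e by metis
    then show "Phih e 0 i = ch e * mwv e i" using mapp_evec0[of "q e" i "adj (Phih e)"] qpos e i
      by (simp add: adj_def)
  qed
  have inv1: "\<forall>e\<in>E. \<forall>i<q e. \<forall>j<q e. (\<Sum>k<q e. Phi e i k * Phih e k j) = (if i = j then 1 else 0)"
    using inv by (simp add: is_inverse_def)
  have inv2: "\<forall>e\<in>E. \<forall>i<q e. \<forall>j<q e. (\<Sum>k<q e. Phih e i k * Phi e k j) = (if i = j then 1 else 0)"
    using inv by (simp add: is_inverse_def)
  have EvE: "Ev E v \<subseteq> E" for v by (auto simp: Ev_def)
  have EwE: "Ew E w \<subseteq> E" for w by (auto simp: Ew_def)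
  have finEv: "finite (Ev E v)" for v using finite_subset[OF EvE finE] .
  have finEw: "finite (Ew E w)" for w using finite_subset[OF EwE finE] .
  have P1: "\<forall>e\<in>E. c e * ch e * einner (q e) (mvw e) (mwv e) = 1"
  proof
    fix e assume e: "e \<in> E"
    have "c e * ch e * einner (q e) (mvw e) (mwv e) = (\<Sum>i<q e. (c e * mvw e i) * (ch e * mwv e i))"
      by (simp add: einner_def sum_distrib_left mult_ac)
    also have "\<dots> = (\<Sum>i<q e. Phih e 0 i * Phi e i 0)"
      using PhiE PhihE e by (intro sum.cong) auto
    also have "\<dots> = 1" using inv2 e qpos by auto
    finally show "c e * ch e * einner (q e) (mvw e) (mwv e) = 1" .
  qed
  have alpha_full: "alpha q E Phih f v = (\<Prod>e\<in>Ev E v. ch e) * tinner q (Ev E v) (f v) (tprod (Ev E v) mwv)" for v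
  proof -
    have mem0: "(\<lambda>_. 0) \<in> asg q (Ev E v)" using qpos EvE by (auto simp: asg_def)
    have "alpha q E Phih f v = fhat q E Phih f v (\<lambda>_. 0)"
      unfolding alpha_def tinner_def tprod_def
      using pick[OF finEv[of v] mem0, where T="fhat q E Phih f v"] by simp
    also have "\<dots> = (\<Sum>y\<in>asg q (Ev E v). (\<Prod>e\<in>Ev E v. Phih e 0 (y e)) * f v y)"
      by (simp add: fhat_def tmap_def)
    also have "\<dots> = (\<Prod>e\<in>Ev E v. ch e) * tinner q (Ev E v) (f v) (tprod (Ev E v) mwv)"
      unfolding tinner_def tprod_def
      by (rule full_lemma[OF finEv[of v]]) (use PhihE EvE in blast)
    finally show ?thesis .
  qed
  have alphah_full: "alphah q E Phi g w = (\<Prod>e\<in>Ew E w. c e) * tinner q (Ew E w) (tprod (Ew E w) mvw) (g w)" for w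
  proof -
    have mem0: "(\<lambda>_. 0) \<in> asg q (Ew E w)" using qpos EwE by (auto simp: asg_def)
    have "alphah q E Phi g w = ghat q E Phi g w (\<lambda>_. 0)"
      unfolding alphah_def tinner_def tprod_def
      using pick'[OF finEw[of w] mem0, where T="ghat q E Phi g w"] by simp
    also have "\<dots> = (\<Sum>y\<in>asg q (Ew E w). (\<Prod>e\<in>Ew E w. adj (Phi e) 0 (y e)) * g w y)"
      by (simp add: ghat_def tmap_def)
    also have "\<dots> = (\<Prod>e\<in>Ew E w. c e) * (\<Sum>y\<in>asg q (Ew E w). g w y * (\<Prod>e\<in>Ew E w. mvw e (y e)))"
      by (rule full_lemma[OF finEw[of w]]) (use PhiE EwE in \<open>auto simp: adj_def\<close>)
    also have "\<dots> = (\<Prod>e\<in>Ew E w. c e) * tinner q (Ew E w) (tprod (Ew E w) mvw) (g w)"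
      by (simp add: tinner_def tprod_def mult.commute)
    finally show ?thesis .
  qed
  have P2: "\<forall>v w. (v, w) \<in> E \<longrightarrow> (\<forall>y\<in>asg q {(v, w)}.
          pinner q (Ev E v - {(v, w)}) (f v) (tprod (Ev E v - {(v, w)}) mwv) y =
            alpha q E Phih f v * c (v, w) / (\<Prod>e\<in>Ev E v - {(v, w)}. ch e) * mvw (v, w) (y (v, w)))"
  proof (intro allI impI ballI)
    fix v w y assume e0E: "(v, w) \<in> E" and y: "y \<in> asg q {(v, w)}"
    define e0 where "e0 = (v, w)"
    define S where "S = Ev E v - {e0}"
    have e0E': "e0 \<in> E" using e0E e0_def by simp
    have hS: "Ev E v = insert e0 S" using e0E by (auto simp: S_def e0_def Ev_def)
    have finS: "finite S" using finEv S_def by simp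
    have e0S: "e0 \<notin> S" by (simp add: S_def)
    have SE: "S \<subseteq> E" using EvE S_def by auto
    define Q where "Q k = (\<Sum>x\<in>asg q S. f v (x(e0:=k)) * (\<Prod>e\<in>S. mwv e (x e)))" for k
    define D where "D = (\<Prod>e\<in>S. ch e)"
    have Dpos: "D > 0" unfolding D_def using c_pos SE by (intro prod_pos) auto
    have Z: "fhat q E Phih f v (\<lambda>e. if e = e0 then j else 0) = (\<Sum>k<q e0. Phih e0 j k * D * Q k)" for j
    proof -
      have "fhat q E Phih f v (\<lambda>e. if e = e0 then j else 0) =
        (\<Sum>y\<in>asg q (insert e0 S). (\<Prod>e\<in>insert e0 S. Phih e (if e = e0 then j else 0) (y e)) * f v y)"
        by (simp add: fhat_def tmap_def hS)
      also have "\<dots> = (\<Sum>k<q e0. Phih e0 j k * D * Q k)"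
        unfolding D_def Q_def by (rule gen_lemma[OF finS e0S]) (use PhihE SE in blast)
      finally show ?thesis .
    qed
    have pickj: "tinner q (Ev E v) (fhat q E Phih f v) (tprod (Ev E v) (\<lambda>e. if e = e0 then evec j else evec 0))
        = fhat q E Phih f v (\<lambda>e. if e = e0 then j else 0)" if j: "j < q e0" for j
    proof -
      have eqp: "\<And>x. (\<Prod>e\<in>Ev E v. (if e = e0 then evec j else evec 0) (x e)) = (\<Prod>e\<in>Ev E v. evec (if e = e0 then j else 0) (x e))"
        by (intro prod.cong) auto
      have mem: "(\<lambda>e. if e = e0 then j else 0) \<in> asg q (Ev E v)"
        using j qpos EvE hS by (auto simp: asg_def)
      show ?thesis
        unfolding tinner_def tprod_def eqp using pick[OF finEv[of v] mem, of "fhat q E Phih f v"] by simp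
    qed
    have alphaZ: "alpha q E Phih f v = fhat q E Phih f v (\<lambda>e. if e = e0 then 0 else 0)"
      using pickj[of 0] qpos e0E' unfolding alpha_def by simp
    have eqs: "\<forall>j<q e0. (\<Sum>k<q e0. Phih e0 j k * Q k) = (if j = 0 then alpha q E Phih f v / D else 0)"
    proof (intro allI impI)
      fix j assume j: "j < q e0"
      have "(\<Sum>k<q e0. Phih e0 j k * D * Q k) = D * (\<Sum>k<q e0. Phih e0 j k * Q k)"
        by (simp add: sum_distrib_left mult_ac)
      moreover have "(\<Sum>k<q e0. Phih e0 j k * D * Q k) = (if j = 0 then alpha q E Phih f v else 0)"
      proof (cases "j = 0")
        case True then show ?thesis using alphaZ Z[of 0] by simp
      next
        case False
        then have "tinner q (Ev E v) (fhat q E Phih f v) (tprod (Ev E v) (\<lambda>e. if e = e0 then evec j else evec 0)) = 0"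
          using orth_f e0E j e0_def by simp
        then show ?thesis using pickj[OF j] Z[of j] False by simp
      qed
      ultimately show "(\<Sum>k<q e0. Phih e0 j k * Q k) = (if j = 0 then alpha q E Phih f v / D else 0)"
        using Dpos by (auto simp: field_simps)
    qed
    have Qi: "Q i = Phi e0 i 0 * (alpha q E Phih f v / D)" if i: "i < q e0" for i
      by (rule inv_apply[where N="Phih e0"]) (use inv1 e0E' eqs qpos i in auto)
    have ye0: "y e0 < q e0" using y by (auto simp: asg_def e0_def)
    have "pinner q S (f v) (tprod S mwv) y = Q (y e0)"
      unfolding pinner_def Q_def tprod_def
    proof (rule sum.cong[OF refl])
      fix x assume x: "x \<in> asg q S"
      have "(\<lambda>e. if e \<in> S then x e else y e) = x(e0 := y e0)"
        using x y e0S by (auto simp: asg_def e0_def)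
      then show "f v (\<lambda>e. if e \<in> S then x e else y e) * (\<Prod>e\<in>S. mwv e (x e)) =
        f v (x(e0 := y e0)) * (\<Prod>e\<in>S. mwv e (x e))" by simp
    qed
    also have "\<dots> = Phi e0 (y e0) 0 * (alpha q E Phih f v / D)" using Qi[OF ye0] .
    also have "\<dots> = alpha q E Phih f v * c e0 / D * mvw e0 (y e0)"
      using PhiE e0E' ye0 by simp
    finally show "pinner q (Ev E v - {(v, w)}) (f v) (tprod (Ev E v - {(v, w)}) mwv) y =
            alpha q E Phih f v * c (v, w) / (\<Prod>e\<in>Ev E v - {(v, w)}. ch e) * mvw (v, w) (y (v, w))"
      by (simp add: S_def D_def e0_def)
  qed
  have P3: "\<forall>v w. (v, w) \<in> E \<longrightarrow> (\<forall>y\<in>asg q {(v, w)}.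
          lpinner q (Ew E w - {(v, w)}) (tprod (Ew E w - {(v, w)}) mvw) (g w) y =
            alphah q E Phi g w * ch (v, w) / (\<Prod>e\<in>Ew E w - {(v, w)}. c e) * mwv (v, w) (y (v, w)))"
  proof (intro allI impI ballI)
    fix v w y assume e0E: "(v, w) \<in> E" and y: "y \<in> asg q {(v, w)}"
    define e0 where "e0 = (v, w)"
    define S where "S = Ew E w - {e0}"
    have e0E': "e0 \<in> E" using e0E e0_def by simp
    have hS: "Ew E w = insert e0 S" using e0E by (auto simp: S_def e0_def Ew_def)
    have finS: "finite S" using finEw S_def by simp
    have e0S: "e0 \<notin> S" by (simp add: S_def)
    have SE: "S \<subseteq> E" using EwE S_def by auto
    define Q where "Q k = (\<Sum>x\<in>asg q S. g w (x(e0:=k)) * (\<Prod>e\<in>S. mvw e (x e)))" for k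
    define D where "D = (\<Prod>e\<in>S. c e)"
    have Dpos: "D > 0" unfolding D_def using c_pos SE by (intro prod_pos) auto
    have Z: "ghat q E Phi g w (\<lambda>e. if e = e0 then j else 0) = (\<Sum>k<q e0. adj (Phi e0) j k * D * Q k)" for j
    proof -
      have "ghat q E Phi g w (\<lambda>e. if e = e0 then j else 0) =
        (\<Sum>y\<in>asg q (insert e0 S). (\<Prod>e\<in>insert e0 S. adj (Phi e) (if e = e0 then j else 0) (y e)) * g w y)"
        by (simp add: ghat_def tmap_def hS)
      also have "\<dots> = (\<Sum>k<q e0. adj (Phi e0) j k * D * Q k)"
        unfolding D_def Q_def by (rule gen_lemma[OF finS e0S]) (use PhiE SE in \<open>auto simp: adj_def\<close>)
      finally show ?thesis .
    qed
    have pickj: "tinner q (Ew E w) (tprod (Ew E w) (\<lambda>e. if e = e0 then evec j else evec 0)) (ghat q E Phi g w)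
        = ghat q E Phi g w (\<lambda>e. if e = e0 then j else 0)" if j: "j < q e0" for j
    proof -
      have eqp: "\<And>x. (\<Prod>e\<in>Ew E w. (if e = e0 then evec j else evec 0) (x e)) = (\<Prod>e\<in>Ew E w. evec (if e = e0 then j else 0) (x e))"
        by (intro prod.cong) auto
      have mem: "(\<lambda>e. if e = e0 then j else 0) \<in> asg q (Ew E w)"
        using j qpos EwE hS by (auto simp: asg_def)
      show ?thesis
        unfolding tinner_def tprod_def eqp using pick'[OF finEw[of w] mem, of "ghat q E Phi g w"] by simp
    qed
    have alphaZ: "alphah q E Phi g w = ghat q E Phi g w (\<lambda>e. if e = e0 then 0 else 0)"
      using pickj[of 0] qpos e0E' unfolding alphah_def by simp
    have eqs: "\<forall>j<q e0. (\<Sum>k<q e0. adj (Phi e0) j k * Q k) = (if j = 0 then alphah q E Phi g w / D else 0)"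
    proof (intro allI impI)
      fix j assume j: "j < q e0"
      have "(\<Sum>k<q e0. adj (Phi e0) j k * D * Q k) = D * (\<Sum>k<q e0. adj (Phi e0) j k * Q k)"
        by (simp add: sum_distrib_left mult_ac)
      moreover have "(\<Sum>k<q e0. adj (Phi e0) j k * D * Q k) = (if j = 0 then alphah q E Phi g w else 0)"
      proof (cases "j = 0")
        case True then show ?thesis using alphaZ Z[of 0] by simp
      next
        case False
        then have "tinner q (Ew E w) (tprod (Ew E w) (\<lambda>e. if e = e0 then evec j else evec 0)) (ghat q E Phi g w) = 0"
          using orth_g e0E j e0_def by simp
        then show ?thesis using pickj[OF j] Z[of j] False by simp
      qed
      ultimately show "(\<Sum>k<q e0. adj (Phi e0) j k * Q k) = (if j = 0 then alphah q E Phi g w / D else 0)"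
        using Dpos by (auto simp: field_simps)
    qed
    have inv1': "\<forall>i<q e0. \<forall>k<q e0. (\<Sum>j<q e0. adj (Phih e0) i j * adj (Phi e0) j k) = (if i = k then 1 else 0)"
    proof (intro allI impI)
      fix i k assume "i < q e0" "k < q e0"
      then have "(\<Sum>j<q e0. Phi e0 k j * Phih e0 j i) = (if k = i then 1 else 0)" using inv1 e0E' by blast
      then show "(\<Sum>j<q e0. adj (Phih e0) i j * adj (Phi e0) j k) = (if i = k then 1 else 0)"
        by (auto simp: adj_def mult.commute)
    qed
    have Qi: "Q i = adj (Phih e0) i 0 * (alphah q E Phi g w / D)" if i: "i < q e0" for i
      by (rule inv_apply[where N="adj (Phi e0)"]) (use inv1' eqs qpos e0E' i in auto)
    have ye0: "y e0 < q e0" using y by (auto simp: asg_def e0_def)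
    have "lpinner q S (tprod S mvw) (g w) y = Q (y e0)"
      unfolding lpinner_def Q_def tprod_def
    proof (rule sum.cong[OF refl])
      fix x assume x: "x \<in> asg q S"
      have "(\<lambda>e. if e \<in> S then x e else y e) = x(e0 := y e0)"
        using x y e0S by (auto simp: asg_def e0_def)
      then show "(\<Prod>e\<in>S. mvw e (x e)) * g w (\<lambda>e. if e \<in> S then x e else y e) =
        g w (x(e0 := y e0)) * (\<Prod>e\<in>S. mvw e (x e))" by simp
    qed
    also have "\<dots> = Phih e0 0 (y e0) * (alphah q E Phi g w / D)" using Qi[OF ye0] by (simp add: adj_def)
    also have "\<dots> = alphah q E Phi g w * ch e0 / D * mwv e0 (y e0)"
      using PhihE e0E' ye0 by simp
    finally show "lpinner q (Ew E w - {(v, w)}) (tprod (Ew E w - {(v, w)}) mvw) (g w) y =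
            alphah q E Phi g w * ch (v, w) / (\<Prod>e\<in>Ew E w - {(v, w)}. c e) * mwv (v, w) (y (v, w))"
      by (simp add: S_def D_def e0_def)
  qed
  have P4: "(\<forall>v\<in>V. alpha q E Phih f v > 0) \<and> (\<forall>w\<in>W. alphah q E Phi g w > 0) \<longrightarrow>
          bp_fixed_point q E C u us f g mvw mwv"
  proof
    assume pos: "(\<forall>v\<in>V. alpha q E Phih f v > 0) \<and> (\<forall>w\<in>W. alphah q E Phi g w > 0)"
    have A: "\<forall>v w. (v, w) \<in> E \<longrightarrow> (\<exists>k>0. \<forall>y\<in>asg q {(v, w)}.
        mvw (v, w) (y (v, w)) = k * pinner q (Ev E v - {(v, w)}) (f v) (tprod (Ev E v - {(v, w)}) mwv) y)"
    proof (intro allI impI)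
      fix v w assume e: "(v, w) \<in> E"
      define D where "D = (\<Prod>e\<in>Ev E v - {(v, w)}. ch e)"
      have Dpos: "D > 0" unfolding D_def using c_pos EvE by (intro prod_pos) blast
      have ap: "alpha q E Phih f v > 0" using pos e graph(3) by auto
      have cp: "c (v, w) > 0" using c_pos e by auto
      show "\<exists>k>0. \<forall>y\<in>asg q {(v, w)}.
        mvw (v, w) (y (v, w)) = k * pinner q (Ev E v - {(v, w)}) (f v) (tprod (Ev E v - {(v, w)}) mwv) y"
        apply (rule exI[of _ "D / (alpha q E Phih f v * c (v, w))"])
        using P2 e Dpos ap cp by (auto simp: D_def[symmetric] field_simps)
    qed
    have B: "\<forall>v w. (v, w) \<in> E \<longrightarrow> (\<exists>k>0. \<forall>y\<in>asg q {(v, w)}.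
        mwv (v, w) (y (v, w)) = k * lpinner q (Ew E w - {(v, w)}) (tprod (Ew E w - {(v, w)}) mvw) (g w) y)"
    proof (intro allI impI)
      fix v w assume e: "(v, w) \<in> E"
      define D where "D = (\<Prod>e\<in>Ew E w - {(v, w)}. c e)"
      have Dpos: "D > 0" unfolding D_def using c_pos EwE by (intro prod_pos) blast
      have ap: "alphah q E Phi g w > 0" using pos e graph(3) by auto
      have cp: "ch (v, w) > 0" using c_pos e by auto
      show "\<exists>k>0. \<forall>y\<in>asg q {(v, w)}.
        mwv (v, w) (y (v, w)) = k * lpinner q (Ew E w - {(v, w)}) (tprod (Ew E w - {(v, w)}) mvw) (g w) y"
        apply (rule exI[of _ "D / (alphah q E Phi g w * ch (v, w))"])
        using P3 e Dpos ap cp by (auto simp: D_def[symmetric] field_simps)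
    qed
    show "bp_fixed_point q E C u us f g mvw mwv"
      unfolding bp_fixed_point_def using A B m_C m_norm by blast
  qed
  have grpV: "(\<Prod>v\<in>V. \<Prod>e\<in>Ev E v. h e) = (\<Prod>e\<in>E. h e)" for h :: "'v \<times> 'w \<Rightarrow> real"
  proof -
    have "fst ` E \<subseteq> V" using graph(3) by auto
    then show ?thesis unfolding Ev_def using prod.group[OF finE graph(1), of fst h] by simp
  qed
  have grpW: "(\<Prod>w\<in>W. \<Prod>e\<in>Ew E w. h e) = (\<Prod>e\<in>E. h e)" for h :: "'v \<times> 'w \<Rightarrow> real"
  proof -
    have "snd ` E \<subseteq> W" using graph(3) by auto
    then show ?thesis unfolding Ew_def using prod.group[OF finE graph(2), of snd h] by simp
  qed
  have inv_e: "(\<Prod>e\<in>E. 1 / einner (q e) (mvw e) (mwv e)) = (\<Prod>e\<in>E. c e * ch e)"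
  proof (rule prod.cong[OF refl])
    fix e assume "e \<in> E"
    then have "c e * ch e * einner (q e) (mvw e) (mwv e) = 1" using P1 by blast
    moreover have "einner (q e) (mvw e) (mwv e) \<noteq> 0" using calculation by auto
    ultimately show "1 / einner (q e) (mvw e) (mwv e) = c e * ch e" by (simp add: field_simps)
  qed
  have P5: "(\<Prod>v\<in>V. alpha q E Phih f v) * (\<Prod>w\<in>W. alphah q E Phi g w) =
        (\<Prod>v\<in>V. tinner q (Ev E v) (f v) (tprod (Ev E v) mwv)) *
        (\<Prod>w\<in>W. tinner q (Ew E w) (tprod (Ew E w) mvw) (g w)) *
        (\<Prod>e\<in>E. 1 / einner (q e) (mvw e) (mwv e))"
    unfolding alpha_full alphah_full prod.distrib grpV grpW inv_e by (simp add: mult_ac)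
  show ?thesis using P1 P2 P3 P4 P5 by blast
qed

end
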